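(* Let $(a_j)_{j=0}^\infty$ be a sequence of complex numbers with $|a_j|=1$ for all $j \ge 0$, and for each $n=0,1,2,\ldots$ let $P_n(z)=\sum_{j=0}^n a_j z^j$. Then $(P_n)_{n=0}^\infty$ is not an ultraflat sequence of unimodular polynomials; that is, there is no sequence $(\varepsilon_n)$ of positive real numbers with $\varepsilon_n\to 0$ such that $$(1-\varepsilon_n)\sqrt{n+1} \le |P_n(e^{it})| \le (1+\varepsilon_n)\sqrt{n+1} \quad \text{for all } t\in\mathbb{R} \text{ and all } n\ge 0.$$
   Context: For $n\ge 0$, $\mathcal{K}_n$ denotes the set of polynomials $Q_n(z)=\sum_{k=0}^n a_k z^k$ with $a_k\in\mathbb{C}$, $|a_k|=1$ (complex unimodular polynomials of degree $n$). Given $\varepsilon>0$, a polynomial $P_n\in\mathcal{K}_n$ is $\varepsilon$-flat if $(1-\varepsilon)\sqrt{n+1}\le |P_n(e^{it})|\le (1+\varepsilon)\sqrt{n+1}$ for all real $t$. A sequence $(P_n)$ with $P_n\in\mathcal{K}_n$ is ultraflat if there is a sequence $(\varepsilon_n)$ of positive numbers converging to $0$ such that each $P_n$ is $\varepsilon_n$-flat. *)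

theory Defs
  imports Complex_Main
begin

definition upoly :: "(nat \<Rightarrow> complex) \<Rightarrow> nat \<Rightarrow> complex \<Rightarrow> complex" where
  "upoly a n z = (\<Sum>k\<le>n. a k * z ^ k)"

definition eps_flat :: "real \<Rightarrow> nat \<Rightarrow> (nat \<Rightarrow> complex) \<Rightarrow> bool" where
  "eps_flat \<epsilon> n a \<longleftrightarrow>
     (\<forall>t::real. (1 - \<epsilon>) * sqrt (real n + 1) \<le> cmod (upoly a n (exp (\<i> * of_real t)))
              \<and> cmod (upoly a n (exp (\<i> * of_real t))) \<le> (1 + \<epsilon>) * sqrt (real n + 1))"

definition ultraflat :: "(nat \<Rightarrow> nat \<Rightarrow> complex) \<Rightarrow> bool" where
  "ultraflat c \<longleftrightarrow>
     (\<exists>\<epsilon> :: nat \<Rightarrow> real. (\<forall>n. \<epsilon> n > 0) \<and> \<epsilon> \<longlonglongrightarrow> 0 \<and> (\<forall>n. eps_flat (\<epsilon> n) n (c n)))"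

end

theory Submission
  imports Defs
begin

definition rt :: "nat \<Rightarrow> nat \<Rightarrow> complex" where
  "rt N k = cis (2 * pi * real k / real N)"

lemma norm_rt[simp]: "cmod (rt N k) = 1"
  by (simp add: rt_def)

lemma orth:
  assumes N: "N > 0" and p: "p < N" and q: "q < N"
  shows "(\<Sum>k<N. rt N k ^ p * cnj (rt N k ^ q)) = (if p = q then of_nat N else 0)"
proof -
  define x where "x = cis (2*pi*(real p - real q)/real N)"
  have trm: "rt N k ^ p * cnj (rt N k ^ q) = x ^ k" for k :: nat
    unfolding x_def rt_def DeMoivre cis_cnj cis_mult
    by (rule arg_cong[where f=cis]) (simp add: field_simps add_divide_distrib[symmetric])
  have xN: "x ^ N = 1"
  proof -
    have "x ^ N = cis (2*pi*(real p - real q))" unfolding x_def DeMoivre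
      by (rule arg_cong[where f=cis]) (use N in \<open>simp add: field_simps\<close>)
    also have "\<dots> = 1" by (rule cis_multiple_2pi) auto
    finally show ?thesis .
  qed
  have eq: "(\<Sum>k<N. rt N k ^ p * cnj (rt N k ^ q)) = (\<Sum>k<N. x ^ k)"
    using trm by simp
  show ?thesis
  proof (cases "p = q")
    case True
    then have "x = 1" unfolding x_def by simp
    then show ?thesis using True by (subst eq) simp
  next
    case False
    have "x \<noteq> 1"
    proof
      assume "x = 1"
      then have "cos (2*pi*(real p - real q)/real N) = 1" unfolding x_def
        by (metis cis.sel(1) one_complex.sel(1))
      then obtain n :: int where n: "2*pi*(real p - real q)/real N = n * 2 * pi"
        by (auto simp: cos_one_2pi_int)
      then have "(2*pi)*(real p - real q) = (2*pi)*(n * real N)" using N by (simp add: field_simps)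
      then have "real p - real q = n * real N" by (subst (asm) mult_left_cancel) auto
      then have "int p - int q = n * int N" by (metis of_int_eq_iff of_int_of_nat_eq of_int_diff of_int_mult)
      show False
      proof (cases "n = 0")
        case True
        then show False using \<open>int p - int q = n * int N\<close> False by simp
      next
        case nz: False
        have "\<bar>n * int N\<bar> \<ge> int N" using nz by (simp add: abs_mult mult_le_cancel_right1) linarith
        moreover have "\<bar>int p - int q\<bar> < int N" using p q by linarith
        ultimately show False using \<open>int p - int q = n * int N\<close> by linarith
      qed
    qed
    then show ?thesis using False by (subst eq) (simp add: sum_gp_strict xN)
  qed
qed

lemma orth':
  assumes "N > 0" "p < N" "q < N"
  shows "(\<Sum>k<N. rt N k ^ p * cnj (rt N k) ^ q) = (if p = q then of_nat N else 0)"
  using orth[OF assms] by simp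

lemma parseval:
  assumes ND: "D < N"
  shows "(\<Sum>k<N. (\<Sum>e\<le>D. b e * rt N k ^ e) * cnj (\<Sum>e\<le>D. c e * rt N k ^ e))
         = of_nat N * (\<Sum>e\<le>D. b e * cnj (c e))"
proof -
  have "(\<Sum>k<N. (\<Sum>e\<le>D. b e * rt N k ^ e) * cnj (\<Sum>e\<le>D. c e * rt N k ^ e))
      = (\<Sum>k<N. \<Sum>e\<le>D. \<Sum>e'\<le>D. b e * cnj (c e') * (rt N k ^ e * cnj (rt N k ^ e')))"
    unfolding cnj_sum sum_product by (simp add: mult_ac)
  also have "\<dots> = (\<Sum>e\<le>D. \<Sum>e'\<le>D. b e * cnj (c e') * (\<Sum>k<N. rt N k ^ e * cnj (rt N k ^ e')))"
    by (simp add: sum.swap[of _ "{..<N}"] sum_distrib_left)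
  also have "\<dots> = (\<Sum>e\<le>D. \<Sum>e'\<le>D. b e * cnj (c e') * (if e = e' then of_nat N else 0))"
    using ND by (intro sum.cong refl) (simp add: orth')
  also have "\<dots> = of_nat N * (\<Sum>e\<le>D. b e * cnj (c e))"
    by (simp add: sum_distrib_left mult_ac if_distrib sum.delta cong: if_cong)
  finally show ?thesis .
qed

lemma card_ge: "j \<le> n \<Longrightarrow> card {i. i \<le> n \<and> n \<le> j + i} = Suc j"
proof -
  assume "j \<le> n"
  then have "{i. i \<le> n \<and> n \<le> j + i} = {n - j..n}" by auto
  then show ?thesis using \<open>j \<le> n\<close> by simp
qed

lemma swap3:
  "(\<Sum>k\<in>K. \<Sum>j\<in>J. \<Sum>i\<in>I. \<Sum>i'\<in>I'. f k j i i') = (\<Sum>j\<in>J. \<Sum>i\<in>I. \<Sum>i'\<in>I'. \<Sum>k\<in>K. f k j i i')"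
proof -
  have "(\<Sum>k\<in>K. \<Sum>j\<in>J. \<Sum>i\<in>I. \<Sum>i'\<in>I'. f k j i i') = (\<Sum>j\<in>J. \<Sum>k\<in>K. \<Sum>i\<in>I. \<Sum>i'\<in>I'. f k j i i')"
    by (rule sum.swap)
  also have "\<dots> = (\<Sum>j\<in>J. \<Sum>i\<in>I. \<Sum>k\<in>K. \<Sum>i'\<in>I'. f k j i i')"
    by (rule sum.cong[OF refl], rule sum.swap)
  also have "\<dots> = (\<Sum>j\<in>J. \<Sum>i\<in>I. \<Sum>i'\<in>I'. \<Sum>k\<in>K. f k j i i')"
    by (rule sum.cong[OF refl], rule sum.cong[OF refl], rule sum.swap)
  finally show ?thesis .
qed

lemma kernel:
  assumes N: "2 * n < N"
  shows "(\<Sum>k<N. upoly a n (z * rt N k) * ((\<Sum>i\<le>n. rt N k ^ i) * cnj ((\<Sum>i\<le>n. rt N k ^ i) * rt N k ^ n)))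
         = of_nat N * (\<Sum>j\<le>n. of_nat (Suc j) * a j * z ^ j)"
proof -
  have "(\<Sum>k<N. upoly a n (z * rt N k) * ((\<Sum>i\<le>n. rt N k ^ i) * cnj ((\<Sum>i\<le>n. rt N k ^ i) * rt N k ^ n)))
      = (\<Sum>k<N. \<Sum>j\<le>n. \<Sum>i\<le>n. \<Sum>i'\<le>n. a j * z ^ j * (rt N k ^ (j + i) * cnj (rt N k) ^ (i' + n)))"
    unfolding upoly_def cnj_sum sum_product sum_distrib_right complex_cnj_mult complex_cnj_power
    by (simp add: power_add power_mult_distrib mult_ac sum_distrib_left)
  also have "\<dots> = (\<Sum>j\<le>n. \<Sum>i\<le>n. \<Sum>i'\<le>n. a j * z ^ j * (\<Sum>k<N. rt N k ^ (j + i) * cnj (rt N k) ^ (i' + n)))"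
    by (subst swap3) (simp add: sum_distrib_left)
  also have "\<dots> = (\<Sum>j\<le>n. \<Sum>i\<le>n. \<Sum>i'\<le>n. a j * z ^ j * (if j + i = i' + n then of_nat N else 0))"
    using N by (intro sum.cong refl) (simp add: orth')
  also have "\<dots> = (\<Sum>j\<le>n. \<Sum>i\<le>n. a j * z ^ j * (if n \<le> j + i then of_nat N else 0))"
  proof (intro sum.cong refl)
    fix j i assume "j \<in> {..n}" "i \<in> {..n}"
    then have "(\<Sum>i'\<le>n. a j * z ^ j * (if j + i = i' + n then of_nat N else 0))
        = (\<Sum>i'\<in>{..n}. if i' = j + i - n then (if n \<le> j + i then a j * z ^ j * of_nat N else 0) else 0)"
      by (intro sum.cong refl) auto
    also have "\<dots> = (if n \<le> j + i then a j * z ^ j * of_nat N else 0)"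
      using \<open>j \<in> {..n}\<close> \<open>i \<in> {..n}\<close> by (simp add: sum.delta'; linarith)
    finally show "(\<Sum>i'\<le>n. a j * z ^ j * (if j + i = i' + n then of_nat N else 0))
        = a j * z ^ j * (if n \<le> j + i then of_nat N else 0)" by simp
  qed
  also have "\<dots> = (\<Sum>j\<le>n. a j * z ^ j * of_nat N * of_nat (card {i. i \<le> n \<and> n \<le> j + i}))"
  proof (intro sum.cong refl)
    fix j
    have "(\<Sum>i\<le>n. a j * z ^ j * (if n \<le> j + i then of_nat N else 0))
        = (\<Sum>i\<in>{i. i \<le> n \<and> n \<le> j + i}. a j * z ^ j * of_nat N)"
    proof -
      have "(\<Sum>i\<le>n. a j * z ^ j * (if n \<le> j + i then of_nat N else 0))
          = (\<Sum>i\<in>{..n}. if n \<le> j + i then a j * z ^ j * of_nat N else 0)"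
        by (intro sum.cong refl) auto
      also have "\<dots> = (\<Sum>i\<in>{i\<in>{..n}. n \<le> j + i}. a j * z ^ j * of_nat N)"
        by (rule sum.inter_filter[symmetric]) simp
      also have "{i\<in>{..n}. n \<le> j + i} = {i. i \<le> n \<and> n \<le> j + i}" by auto
      finally show ?thesis .
    qed
    then show "(\<Sum>i\<le>n. a j * z ^ j * (if n \<le> j + i then of_nat N else 0))
        = a j * z ^ j * of_nat N * of_nat (card {i. i \<le> n \<and> n \<le> j + i})" by simp
  qed
  also have "\<dots> = of_nat N * (\<Sum>j\<le>n. of_nat (Suc j) * a j * z ^ j)"
    by (simp add: card_ge sum_distrib_left mult_ac)
  finally show ?thesis .
qed

definition Sp :: "(nat \<Rightarrow> complex) \<Rightarrow> nat \<Rightarrow> complex \<Rightarrow> complex" where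
  "Sp a n w = (\<Sum>j\<le>n. of_nat (n + 1 - j) * a j * w ^ j)"
definition Zp :: "(nat \<Rightarrow> complex) \<Rightarrow> nat \<Rightarrow> complex \<Rightarrow> complex" where
  "Zp a n w = (\<Sum>j\<le>n. of_nat j * a j * w ^ j)"
definition Kp :: "(nat \<Rightarrow> complex) \<Rightarrow> nat \<Rightarrow> complex \<Rightarrow> complex" where
  "Kp a n w = (\<Sum>j\<le>n. of_nat (Suc j) * a j * w ^ j)"

lemma Kp_eq: "Kp a n w = upoly a n w + Zp a n w"
  unfolding Kp_def upoly_def Zp_def by (simp add: sum.distrib[symmetric] algebra_simps)

lemma Sp_eq1: "Sp a n w = of_nat (n + 1) * upoly a n w - Zp a n w"
proof -
  have "Sp a n w = (\<Sum>j\<le>n. of_nat (n + 1) * (a j * w ^ j) - of_nat j * a j * w ^ j)"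
    unfolding Sp_def by (intro sum.cong refl) (auto simp: of_nat_diff algebra_simps)
  then show ?thesis unfolding upoly_def Zp_def by (simp add: sum_subtractf sum_distrib_left)
qed

lemma Sp_eq2: "Sp a n w = of_nat (n + 2) * upoly a n w - Kp a n w"
  unfolding Sp_eq1 Kp_eq by (simp add: algebra_simps)

lemma sum_lin: "m \<le> n \<Longrightarrow> (\<Sum>j\<le>m. real (n + 1 - j)) = real (m + 1) * real (n + 1) - real m * real (m + 1) / 2"
proof (induction m)
  case 0 then show ?case by simp
next
  case (Suc m)
  then have "(\<Sum>j\<le>Suc m. real (n + 1 - j)) = real (m + 1) * real (n + 1) - real m * real (m + 1) / 2 + real (n + 1 - Suc m)"
    by simp
  also have "real (n + 1 - Suc m) = real n - real m" using Suc.prems by (simp add: of_nat_diff)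
  finally show ?case by (simp add: field_simps)
qed

lemma cross:
  assumes mn: "m \<le> n" and nN: "n < N" and a: "\<And>j. cmod (a j) = 1"
  shows "(\<Sum>k<N. Sp a n (rt N k) * cnj (upoly a m (rt N k))) = of_nat N * of_real (\<Sum>j\<le>m. real (n + 1 - j))"
proof -
  have U: "upoly a m w = (\<Sum>e\<le>n. (if e \<le> m then a e else 0) * w ^ e)" for w
    unfolding upoly_def using mn by (intro sum.mono_neutral_cong_right[symmetric]) auto
  have S: "Sp a n w = (\<Sum>e\<le>n. (of_nat (n + 1 - e) * a e) * w ^ e)" for w
    unfolding Sp_def by simp
  have "(\<Sum>k<N. Sp a n (rt N k) * cnj (upoly a m (rt N k)))
      = of_nat N * (\<Sum>e\<le>n. (of_nat (n + 1 - e) * a e) * cnj (if e \<le> m then a e else 0))"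
    unfolding U S by (rule parseval[OF nN])
  also have "(\<Sum>e\<le>n. (of_nat (n + 1 - e) * a e) * cnj (if e \<le> m then a e else 0))
      = (\<Sum>e\<le>m. of_nat (n + 1 - e) * (a e * cnj (a e)))"
    using mn by (intro sum.mono_neutral_cong_right) (auto simp: mult_ac)
  also have "\<dots> = (\<Sum>e\<le>m. of_real (real (n + 1 - e)))"
  proof (intro sum.cong refl)
    fix e
    have "a e * cnj (a e) = 1" using complex_norm_square[of "a e"] a[of e] by simp
    then show "of_nat (n + 1 - e) * (a e * cnj (a e)) = complex_of_real (real (n + 1 - e))" by simp
  qed
  finally show ?thesis by simp
qed

lemma Kp_bound:
  assumes N: "N = 2 * n + 1" and z: "cmod z = 1"
    and M: "\<And>w. cmod w = 1 \<Longrightarrow> cmod (upoly a n w) \<le> M"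
  shows "cmod (Kp a n z) \<le> real (n + 1) * M"
proof -
  define D where "D k = (\<Sum>i\<le>n. rt N k ^ i)" for k
  have ker: "(\<Sum>k<N. upoly a n (z * rt N k) * (D k * cnj (D k * rt N k ^ n))) = of_nat N * Kp a n z"
    unfolding D_def Kp_def by (rule kernel) (use N in simp)
  have DD: "(\<Sum>k<N. D k * cnj (D k)) = of_nat N * of_nat (n + 1)"
    using parseval[of n N "\<lambda>_. 1" "\<lambda>_. 1"] N unfolding D_def by simp
  have DD2: "(\<Sum>k<N. (cmod (D k))^2) = real N * real (n + 1)"
  proof -
    have "complex_of_real (\<Sum>k<N. (cmod (D k))^2) = (\<Sum>k<N. D k * cnj (D k))"
      by (simp only: of_real_sum complex_norm_square)
    also have "\<dots> = complex_of_real (real N * real (n + 1))" using DD by simp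
    finally show ?thesis by (simp only: of_real_eq_iff)
  qed
  have "real N * cmod (Kp a n z) = cmod (\<Sum>k<N. upoly a n (z * rt N k) * (D k * cnj (D k * rt N k ^ n)))"
    using ker by (simp add: norm_mult)
  also have "\<dots> \<le> (\<Sum>k<N. cmod (upoly a n (z * rt N k) * (D k * cnj (D k * rt N k ^ n))))"
    by (rule norm_sum)
  also have "\<dots> = (\<Sum>k<N. cmod (upoly a n (z * rt N k)) * (cmod (D k))^2)"
    by (simp add: norm_mult norm_power power2_eq_square)
  also have "\<dots> \<le> (\<Sum>k<N. M * (cmod (D k))^2)"
    by (intro sum_mono mult_right_mono M) (auto simp: norm_mult z)
  also have "\<dots> = M * (real N * real (n + 1))" by (simp add: sum_distrib_left[symmetric] DD2)
  finally have "real N * cmod (Kp a n z) \<le> real N * (real (n + 1) * M)" by (simp add: mult_ac)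
  then show ?thesis using N by simp
qed

lemma Re_lower:
  assumes N: "N = 2 * n + 1" and z: "cmod z = 1"
    and B: "\<And>w. cmod w = 1 \<Longrightarrow> L \<le> cmod (upoly a n w) \<and> cmod (upoly a n w) \<le> M"
    and L0: "0 \<le> L"
  shows "Re (Sp a n z * cnj (upoly a n z)) \<ge> real (n + 1) * M * (L - M)"
proof -
  define R where "R = cmod (upoly a n z)"
  have RL: "L \<le> R" and RM: "R \<le> M" using B[OF z] by (auto simp: R_def)
  have K: "cmod (Kp a n z) \<le> real (n + 1) * M"
    by (rule Kp_bound[OF N z]) (use B in blast)
  have "Sp a n z * cnj (upoly a n z) = of_nat (n + 2) * (upoly a n z * cnj (upoly a n z)) - Kp a n z * cnj (upoly a n z)"
    unfolding Sp_eq2 by (simp add: algebra_simps)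
  then have "Re (Sp a n z * cnj (upoly a n z)) = real (n + 2) * R^2 - Re (Kp a n z * cnj (upoly a n z))"
    unfolding R_def complex_norm_square[symmetric] by simp
  moreover have "Re (Kp a n z * cnj (upoly a n z)) \<le> real (n + 1) * M * R"
  proof -
    have "Re (Kp a n z * cnj (upoly a n z)) \<le> cmod (Kp a n z * cnj (upoly a n z))" by (rule complex_Re_le_cmod)
    also have "\<dots> = cmod (Kp a n z) * R" by (simp add: norm_mult R_def)
    also have "\<dots> \<le> real (n + 1) * M * R" using K R_def by (simp add: mult_right_mono)
    finally show ?thesis .
  qed
  ultimately have "Re (Sp a n z * cnj (upoly a n z)) \<ge> real (n + 2) * R^2 - real (n + 1) * M * R" by simp
  moreover have "real (n + 2) * R^2 - real (n + 1) * M * R \<ge> real (n + 1) * M * (L - M)"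
  proof -
    have R0: "0 \<le> R" using RL L0 by simp
    have "R * (R - M) \<ge> M * (L - M)"
    proof -
      have "0 \<le> (M - R)^2" by simp
      moreover have "0 \<le> M * (R - L)" using RL RM R0 by simp
      moreover have "R * (R - M) - M * (L - M) = (M - R)^2 + M * (R - L)" by (simp add: algebra_simps power2_eq_square)
      ultimately show ?thesis by linarith
    qed
    then have "real (n + 1) * (R * (R - M)) \<ge> real (n + 1) * (M * (L - M))"
      by (intro mult_left_mono) auto
    moreover have "real (n + 2) * R^2 \<ge> real (n + 1) * R^2" by (intro mult_right_mono) auto
    moreover have "real (n + 1) * R^2 - real (n + 1) * M * R = real (n + 1) * (R * (R - M))"
      by (simp add: algebra_simps power2_eq_square)
    moreover have "real (n + 1) * (M * (L - M)) = real (n + 1) * M * (L - M)" by simp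
    ultimately show ?thesis by linarith
  qed
  ultimately show ?thesis by linarith
qed

definition gco :: "(nat \<Rightarrow> complex) \<Rightarrow> nat \<Rightarrow> nat \<Rightarrow> complex" where
  "gco a n e = (\<Sum>j\<le>n. \<Sum>l\<le>n. if j + n = l + e then a j * cnj (a l) else 0)"
definition hco :: "(nat \<Rightarrow> complex) \<Rightarrow> nat \<Rightarrow> nat \<Rightarrow> complex" where
  "hco a n e = gco a n e - (if e = n then of_nat (n + 1) else 0)"

lemma regroup:
  fixes n :: nat and f :: "nat \<Rightarrow> nat \<Rightarrow> 'a::comm_ring_1"
  shows "(\<Sum>e\<le>2*n. (\<Sum>j\<le>n. \<Sum>l\<le>n. if j + n = l + e then f j l else 0) * F e)
   = (\<Sum>j\<le>n. \<Sum>l\<le>n. f j l * F (j + n - l))"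
proof -
  have "(\<Sum>e\<le>2*n. (\<Sum>j\<le>n. \<Sum>l\<le>n. if j + n = l + e then f j l else 0) * F e)
      = (\<Sum>e\<le>2*n. \<Sum>j\<le>n. \<Sum>l\<le>n. if j + n = l + e then f j l * F e else 0)"
    unfolding sum_distrib_right by (intro sum.cong refl) auto
  also have "\<dots> = (\<Sum>j\<le>n. \<Sum>e\<le>2*n. \<Sum>l\<le>n. if j + n = l + e then f j l * F e else 0)"
    by (rule sum.swap)
  also have "\<dots> = (\<Sum>j\<le>n. \<Sum>l\<le>n. \<Sum>e\<le>2*n. if j + n = l + e then f j l * F e else 0)"
    by (rule sum.cong[OF refl], rule sum.swap)
  also have "\<dots> = (\<Sum>j\<le>n. \<Sum>l\<le>n. f j l * F (j + n - l))"
  proof (intro sum.cong refl)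
    fix j l assume j: "j \<in> {..n}" and l: "l \<in> {..n}"
    have "(\<Sum>e\<le>2*n. if j + n = l + e then f j l * F e else 0)
        = (\<Sum>e\<le>2*n. if e = j + n - l then f j l * F (j + n - l) else 0)"
      using j l by (intro sum.cong refl) auto
    also have "\<dots> = f j l * F (j + n - l)" using j l by (simp add: sum.delta'; linarith)
    finally show "(\<Sum>e\<le>2*n. if j + n = l + e then f j l * F e else 0) = f j l * F (j + n - l)" .
  qed
  finally show ?thesis .
qed

lemma unit_pow:
  assumes w: "cmod w = 1" and l: "l \<le> n"
  shows "w ^ j * cnj w ^ l * w ^ n = w ^ (j + n - l)"
proof -
  have cw: "cnj w * w = 1" using complex_norm_square[of w] w by (simp add: mult.commute)
  have "w ^ n = w ^ (n - l) * w ^ l" using l by (simp add: power_add[symmetric])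
  then have "w ^ j * cnj w ^ l * w ^ n = w ^ j * w ^ (n - l) * (cnj w * w) ^ l"
    by (simp add: power_mult_distrib mult_ac)
  also have "\<dots> = w ^ (j + n - l)" using l cw by (simp add: power_add[symmetric])
  finally show ?thesis .
qed

lemma unit_pow':
  assumes w: "cmod w = 1" and l: "l \<le> n"
  shows "w ^ n * (c * (w ^ j * cnj w ^ l)) = c * w ^ (j + n - l)"
proof -
  have "w ^ n * (c * (w ^ j * cnj w ^ l)) = c * (w ^ j * cnj w ^ l * w ^ n)" by (simp only: mult_ac)
  also have "\<dots> = c * w ^ (j + n - l)" by (simp only: unit_pow[OF w l])
  finally show ?thesis .
qed

lemma PP_expand:
  "cnj (upoly a n w) * upoly a n w = (\<Sum>j\<le>n. \<Sum>l\<le>n. a j * cnj (a l) * (w ^ j * cnj w ^ l))"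
  unfolding upoly_def cnj_sum sum_product
  by (subst sum.swap) (simp add: mult_ac)

lemma PZ_expand:
  "cnj (upoly a n w) * Zp a n w - cnj (Zp a n w) * upoly a n w
   = (\<Sum>j\<le>n. \<Sum>l\<le>n. a j * cnj (a l) * (of_nat j - of_nat l) * (w ^ j * cnj w ^ l))"
proof -
  have 1: "cnj (upoly a n w) * Zp a n w = (\<Sum>j\<le>n. \<Sum>l\<le>n. a j * cnj (a l) * of_nat j * (w ^ j * cnj w ^ l))"
    unfolding upoly_def Zp_def cnj_sum sum_product
    by (subst sum.swap) (simp add: mult_ac)
  have 2: "cnj (Zp a n w) * upoly a n w = (\<Sum>j\<le>n. \<Sum>l\<le>n. a j * cnj (a l) * of_nat l * (w ^ j * cnj w ^ l))"
    unfolding upoly_def Zp_def cnj_sum sum_product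
    by (subst sum.swap) (simp add: mult_ac)
  show ?thesis unfolding 1 2 sum_subtractf[symmetric] by (simp add: algebra_simps)
qed

lemma C1:
  assumes w: "cmod w = 1"
  shows "w ^ n * (cnj (upoly a n w) * upoly a n w - of_nat (n + 1)) = (\<Sum>e\<le>2*n. hco a n e * w ^ e)"
proof -
  have "w ^ n * (cnj (upoly a n w) * upoly a n w) = (\<Sum>j\<le>n. \<Sum>l\<le>n. a j * cnj (a l) * w ^ (j + n - l))"
    unfolding PP_expand sum_distrib_left
    by (intro sum.cong refl) (simp add: unit_pow'[OF w])
  also have "\<dots> = (\<Sum>e\<le>2*n. gco a n e * w ^ e)"
    unfolding gco_def by (rule regroup[symmetric])
  finally have A: "w ^ n * (cnj (upoly a n w) * upoly a n w) = (\<Sum>e\<le>2*n. gco a n e * w ^ e)" .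
  have B: "(\<Sum>e\<le>2*n. (if e = n then of_nat (n + 1) else 0) * w ^ e) = of_nat (n + 1) * w ^ n"
  proof -
    have "(\<Sum>e\<le>2*n. (if e = n then of_nat (n + 1) else 0) * w ^ e) = (\<Sum>e\<le>2*n. if e = n then of_nat (n + 1) * w ^ n else 0)"
      by (intro sum.cong refl) auto
    also have "\<dots> = of_nat (n + 1) * w ^ n" by (simp add: sum.delta)
    finally show ?thesis .
  qed
  show ?thesis
    unfolding hco_def using A B by (simp add: algebra_simps sum_subtractf)
qed

lemma C2:
  assumes w: "cmod w = 1"
  shows "w ^ n * (cnj (upoly a n w) * Zp a n w - cnj (Zp a n w) * upoly a n w)
         = (\<Sum>e\<le>2*n. ((of_nat e - of_nat n) * hco a n e) * w ^ e)"
proof -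
  have "w ^ n * (cnj (upoly a n w) * Zp a n w - cnj (Zp a n w) * upoly a n w)
      = (\<Sum>j\<le>n. \<Sum>l\<le>n. a j * cnj (a l) * ((of_nat (j + n - l) - of_nat n) * w ^ (j + n - l)))"
    unfolding PZ_expand sum_distrib_left
  proof (intro sum.cong refl)
    fix j l assume "j \<in> {..n}" "l \<in> {..n}"
    then have "w ^ n * (a j * cnj (a l) * (of_nat j - of_nat l) * (w ^ j * cnj w ^ l))
        = a j * cnj (a l) * (of_nat j - of_nat l) * w ^ (j + n - l)" by (simp add: unit_pow'[OF w])
    also have "\<dots> = a j * cnj (a l) * ((of_nat (j + n - l) - of_nat n) * w ^ (j + n - l))"
      using \<open>l \<in> {..n}\<close> by (simp add: of_nat_diff)
    finally show "w ^ n * (a j * cnj (a l) * (of_nat j - of_nat l) * (w ^ j * cnj w ^ l))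
        = a j * cnj (a l) * ((of_nat (j + n - l) - of_nat n) * w ^ (j + n - l))" .
  qed
  also have "\<dots> = (\<Sum>e\<le>2*n. gco a n e * ((of_nat e - of_nat n) * w ^ e))"
    unfolding gco_def by (rule regroup[symmetric])
  also have "\<dots> = (\<Sum>e\<le>2*n. ((of_nat e - of_nat n) * hco a n e) * w ^ e)"
    unfolding hco_def by (intro sum.cong refl) (auto simp: algebra_simps)
  finally show ?thesis .
qed

lemma parseval_norm:
  assumes "D < N"
  shows "(\<Sum>k<N. (cmod (\<Sum>e\<le>D. b e * rt N k ^ e))^2) = real N * (\<Sum>e\<le>D. (cmod (b e))^2)"
proof -
  have "complex_of_real (\<Sum>k<N. (cmod (\<Sum>e\<le>D. b e * rt N k ^ e))^2)
      = (\<Sum>k<N. (\<Sum>e\<le>D. b e * rt N k ^ e) * cnj (\<Sum>e\<le>D. b e * rt N k ^ e))"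
    by (simp only: of_real_sum complex_norm_square)
  also have "\<dots> = of_nat N * (\<Sum>e\<le>D. b e * cnj (b e))" by (rule parseval[OF assms])
  also have "\<dots> = complex_of_real (real N * (\<Sum>e\<le>D. (cmod (b e))^2))"
    by (simp only: of_real_sum complex_norm_square of_real_mult of_real_of_nat_eq)
  finally show ?thesis by (simp only: of_real_eq_iff)
qed

lemma C3:
  fixes h :: "nat \<Rightarrow> complex"
  assumes "2 * n < N"
  shows "(\<Sum>k<N. (cmod (\<Sum>e\<le>2*n. ((of_nat e - of_nat n) * h e) * rt N k ^ e))^2)
         \<le> (real n)^2 * (\<Sum>k<N. (cmod (\<Sum>e\<le>2*n. h e * rt N k ^ e))^2)"
proof -
  have "(\<Sum>k<N. (cmod (\<Sum>e\<le>2*n. ((of_nat e - of_nat n) * h e) * rt N k ^ e))^2)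
      = real N * (\<Sum>e\<le>2*n. (cmod ((of_nat e - of_nat n) * h e))^2)"
    by (rule parseval_norm[OF assms])
  also have "\<dots> \<le> real N * (\<Sum>e\<le>2*n. (real n)^2 * (cmod (h e))^2)"
  proof (intro mult_left_mono sum_mono)
    fix e assume "e \<in> {..2*n}"
    then have "\<bar>real e - real n\<bar> \<le> real n" by auto
    then have "(real e - real n)^2 \<le> (real n)^2"
      by (metis abs_le_square_iff abs_of_nat)
    moreover have "cmod ((of_nat e - of_nat n) * h e) = \<bar>real e - real n\<bar> * cmod (h e)"
    proof -
      have "(of_nat e - of_nat n :: complex) = complex_of_real (real e - real n)" by simp
      then show ?thesis by (simp only: norm_mult norm_of_real)
    qed
    ultimately show "(cmod ((of_nat e - of_nat n) * h e))^2 \<le> (real n)^2 * (cmod (h e))^2"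
      by (simp add: power_mult_distrib mult_right_mono)
  qed simp
  also have "\<dots> = (real n)^2 * (real N * (\<Sum>e\<le>2*n. (cmod (h e))^2))"
    by (simp add: sum_distrib_left mult_ac)
  also have "\<dots> = (real n)^2 * (\<Sum>k<N. (cmod (\<Sum>e\<le>2*n. h e * rt N k ^ e))^2)"
    by (simp only: parseval_norm[OF assms])
  finally show ?thesis .
qed

lemma Xbound:
  assumes N: "N = 2 * n + 1"
    and G: "\<And>w. cmod w = 1 \<Longrightarrow> cmod (cnj (upoly a n w) * upoly a n w - of_nat (n + 1)) \<le> g"
  shows "(\<Sum>k<N. (cmod (cnj (upoly a n (rt N k)) * Zp a n (rt N k) - cnj (Zp a n (rt N k)) * upoly a n (rt N k)))^2)
         \<le> (real n)^2 * (real N * g^2)"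
proof -
  have e1: "cmod (cnj (upoly a n (rt N k)) * Zp a n (rt N k) - cnj (Zp a n (rt N k)) * upoly a n (rt N k))
      = cmod (\<Sum>e\<le>2*n. ((of_nat e - of_nat n) * hco a n e) * rt N k ^ e)" for k
    unfolding C2[OF norm_rt, symmetric] by (simp add: norm_mult norm_power)
  have e2: "cmod (cnj (upoly a n (rt N k)) * upoly a n (rt N k) - of_nat (n + 1))
      = cmod (\<Sum>e\<le>2*n. hco a n e * rt N k ^ e)" for k
    unfolding C1[OF norm_rt, symmetric] by (simp add: norm_mult norm_power)
  have "(\<Sum>k<N. (cmod (cnj (upoly a n (rt N k)) * Zp a n (rt N k) - cnj (Zp a n (rt N k)) * upoly a n (rt N k)))^2)
      \<le> (real n)^2 * (\<Sum>k<N. (cmod (\<Sum>e\<le>2*n. hco a n e * rt N k ^ e))^2)"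
    unfolding e1 by (rule C3) (use N in simp)
  also have "\<dots> \<le> (real n)^2 * (\<Sum>k<N. g^2)"
  proof (intro mult_left_mono sum_mono)
    fix k
    have "cmod (\<Sum>e\<le>2*n. hco a n e * rt N k ^ e) \<le> g" by (subst e2[symmetric]) (rule G[OF norm_rt])
    then show "(cmod (\<Sum>e\<le>2*n. hco a n e * rt N k ^ e))^2 \<le> g^2"
      by (simp add: power_mono)
  qed simp
  finally show ?thesis by simp
qed

lemma norm_im: "cmod (y - cnj y) = 2 * \<bar>Im y\<bar>"
proof -
  have "y - cnj y = complex_of_real (2 * Im y) * \<i>" by (simp add: complex_eq_iff)
  then show ?thesis by (simp add: norm_mult)
qed

lemma main_est:
  assumes N: "N = 2 * n + 1" and a: "\<And>j. cmod (a j) = 1"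
    and e0: "0 < \<epsilon>" and e1: "\<epsilon> \<le> 1/4"
    and F: "\<And>w. cmod w = 1 \<Longrightarrow> (1 - \<epsilon>) * sqrt (real n + 1) \<le> cmod (upoly a n w)
                                  \<and> cmod (upoly a n w) \<le> (1 + \<epsilon>) * sqrt (real n + 1)"
  shows "(\<Sum>k<N. cmod (Sp a n (rt N k) * cnj (upoly a n (rt N k))))
         \<le> real N * (real (n + 1) * real (n + 2) / 2 + 7 * \<epsilon> * (real n + 1)^2)"
proof -
  define s where "s = sqrt (real n + 1)"
  have s2: "s^2 = real n + 1" unfolding s_def by simp
  have s0: "0 \<le> s" unfolding s_def by simp
  define P where "P k = upoly a n (rt N k)" for k
  define x where "x k = Sp a n (rt N k) * cnj (P k)" for k
  define X where "X k = cnj (P k) * Zp a n (rt N k) - cnj (Zp a n (rt N k)) * P k" for k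
  define \<beta> where "\<beta> = 2 * \<epsilon> * (1 + \<epsilon>) * (real n + 1)^2"
  define lam where "lam = 3 * \<epsilon> * (real n + 1)^2"
  have lam0: "lam > 0" unfolding lam_def using e0 by simp
  have b0: "\<beta> \<ge> 0" unfolding \<beta>_def using e0 by simp
  have ReL: "Re (x k) \<ge> - \<beta>" for k
  proof -
    have "Re (x k) \<ge> real (n + 1) * ((1 + \<epsilon>) * s) * ((1 - \<epsilon>) * s - (1 + \<epsilon>) * s)"
      unfolding x_def P_def
      by (rule Re_lower[OF N norm_rt]) (use F e1 s0 in \<open>auto simp: s_def\<close>)
    also have "real (n + 1) * ((1 + \<epsilon>) * s) * ((1 - \<epsilon>) * s - (1 + \<epsilon>) * s) = - \<beta>"
    proof -
      have "real (n + 1) * ((1 + \<epsilon>) * s) * ((1 - \<epsilon>) * s - (1 + \<epsilon>) * s) = - (2 * \<epsilon> * (1 + \<epsilon>) * (real n + 1) * s^2)"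
        by (simp add: algebra_simps power2_eq_square)
      then show ?thesis unfolding \<beta>_def s2 by (simp add: power2_eq_square)
    qed
    finally show ?thesis .
  qed
  have ImX: "\<bar>Im (x k)\<bar> = cmod (X k) / 2" for k
  proof -
    have "x k = of_nat (n + 1) * (P k * cnj (P k)) - cnj (P k) * Zp a n (rt N k)"
      unfolding x_def P_def Sp_eq1 by (simp add: algebra_simps)
    moreover have "Im (P k * cnj (P k)) = 0" by (simp add: complex_norm_square[symmetric] del: of_real_power)
    ultimately have "Im (x k) = - Im (cnj (P k) * Zp a n (rt N k))" by simp
    moreover have "X k = cnj (P k) * Zp a n (rt N k) - cnj (cnj (P k) * Zp a n (rt N k))"
      unfolding X_def by (simp add: mult.commute)
    ultimately show ?thesis using norm_im[of "cnj (P k) * Zp a n (rt N k)"] by simp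
  qed
  have pt: "cmod (x k) \<le> Re (x k) + 2 * \<beta> + (cmod (X k))^2 / (4 * lam) + lam / 4" for k
  proof -
    have "cmod (x k) \<le> \<bar>Re (x k)\<bar> + \<bar>Im (x k)\<bar>" by (rule cmod_le)
    moreover have "\<bar>Re (x k)\<bar> \<le> Re (x k) + 2 * \<beta>" using ReL[of k] b0 by linarith
    moreover have "cmod (X k) / 2 \<le> (cmod (X k))^2 / (4 * lam) + lam / 4"
    proof -
      have "0 \<le> (cmod (X k) - lam)^2" by simp
      then have "2 * lam * cmod (X k) \<le> (cmod (X k))^2 + lam^2" by (simp add: power2_eq_square algebra_simps)
      then show ?thesis using lam0 by (simp add: field_simps power2_eq_square)
    qed
    ultimately show ?thesis using ImX[of k] by linarith
  qed
  have Gb: "cmod (cnj (upoly a n w) * upoly a n w - of_nat (n + 1)) \<le> 3 * \<epsilon> * (real n + 1)" if w: "cmod w = 1" for w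
  proof -
    define R where "R = cmod (upoly a n w)"
    have RL: "(1 - \<epsilon>) * s \<le> R" and RM: "R \<le> (1 + \<epsilon>) * s" using F[OF w] by (auto simp: R_def s_def)
    have "cnj (upoly a n w) * upoly a n w - of_nat (n + 1) = complex_of_real (R^2 - (real n + 1))"
      unfolding R_def by (simp add: complex_norm_square mult.commute del: of_real_power)
    then have eq: "cmod (cnj (upoly a n w) * upoly a n w - of_nat (n + 1)) = \<bar>R^2 - (real n + 1)\<bar>"
      by (simp only: norm_of_real)
    have l1: "0 \<le> (1 - \<epsilon>) * s" using e1 s0 by simp
    have "((1 - \<epsilon>) * s)^2 \<le> R^2" using RL l1 by (intro power_mono) auto
    moreover have "R^2 \<le> ((1 + \<epsilon>) * s)^2" using RM RL l1 by (intro power_mono) auto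
    ultimately have "(1 - \<epsilon>)^2 * (real n + 1) \<le> R^2" "R^2 \<le> (1 + \<epsilon>)^2 * (real n + 1)"
      using s2 by (simp_all add: power_mult_distrib)
    moreover have "(1 - \<epsilon>)^2 * (real n + 1) \<ge> (real n + 1) - 3 * \<epsilon> * (real n + 1)"
      using e0 by (simp add: power2_eq_square algebra_simps)
    moreover have "(1 + \<epsilon>)^2 * (real n + 1) \<le> (real n + 1) + 3 * \<epsilon> * (real n + 1)"
    proof -
      have "\<epsilon> * \<epsilon> \<le> \<epsilon>" using e0 e1 by (simp add: mult_le_cancel_left1)
      then have "\<epsilon> * \<epsilon> * (real n + 1) \<le> \<epsilon> * (real n + 1)" by (intro mult_right_mono) auto
      then show ?thesis by (simp add: power2_eq_square algebra_simps)
    qed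
    ultimately show ?thesis unfolding eq by linarith
  qed
  have Xs: "(\<Sum>k<N. (cmod (X k))^2) \<le> (real n)^2 * (real N * (3 * \<epsilon> * (real n + 1))^2)"
    unfolding X_def P_def by (rule Xbound[OF N Gb])
  have Rs: "(\<Sum>k<N. Re (x k)) = real N * (real (n + 1) * real (n + 2) / 2)"
  proof -
    have "(\<Sum>k<N. x k) = of_nat N * of_real (\<Sum>j\<le>n. real (n + 1 - j))"
      unfolding x_def P_def by (rule cross) (use N a in auto)
    then have "(\<Sum>k<N. Re (x k)) = real N * (\<Sum>j\<le>n. real (n + 1 - j))"
      by (metis Re_complex_of_real Re_sum of_real_mult of_real_of_nat_eq)
    also have "(\<Sum>j\<le>n. real (n + 1 - j)) = real (n + 1) * real (n + 2) / 2"
      by (subst sum_lin) (auto simp: field_simps)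
    finally show ?thesis .
  qed
  have "(\<Sum>k<N. cmod (x k)) \<le> (\<Sum>k<N. Re (x k) + 2 * \<beta> + (cmod (X k))^2 / (4 * lam) + lam / 4)"
    by (rule sum_mono) (rule pt)
  also have "\<dots> = (\<Sum>k<N. Re (x k)) + real N * (2 * \<beta> + lam / 4) + (\<Sum>k<N. (cmod (X k))^2) / (4 * lam)"
    by (simp add: sum.distrib sum_divide_distrib algebra_simps)
  also have "\<dots> \<le> (\<Sum>k<N. Re (x k)) + real N * (2 * \<beta> + lam / 4) + (real n)^2 * (real N * (3 * \<epsilon> * (real n + 1))^2) / (4 * lam)"
    using Xs lam0 by (intro add_left_mono divide_right_mono) auto
  also have "(real n)^2 * (real N * (3 * \<epsilon> * (real n + 1))^2) / (4 * lam) = real N * (3/4 * \<epsilon> * (real n)^2)"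
    using lam0 by (subst divide_eq_eq) (simp add: lam_def algebra_simps power2_eq_square)
  also have "(\<Sum>k<N. Re (x k)) + real N * (2 * \<beta> + lam / 4) + real N * (3/4 * \<epsilon> * (real n)^2)
      \<le> real N * (real (n + 1) * real (n + 2) / 2 + 7 * \<epsilon> * (real n + 1)^2)"
  proof -
    have "2 * \<beta> + lam / 4 + 3/4 * \<epsilon> * (real n)^2 \<le> 7 * \<epsilon> * (real n + 1)^2"
    proof -
      have "(real n)^2 \<le> (real n + 1)^2" by (simp add: power_mono)
      then have i1: "3/4 * \<epsilon> * (real n)^2 \<le> 3/4 * \<epsilon> * (real n + 1)^2" using e0 by simp
      have "\<epsilon> * \<epsilon> * (real n + 1)^2 \<le> 1/4 * \<epsilon> * (real n + 1)^2"
        using e0 e1 by (intro mult_right_mono) auto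
      then have "2 * \<beta> \<le> 5 * \<epsilon> * (real n + 1)^2" unfolding \<beta>_def by (simp add: algebra_simps)
      moreover have "0 \<le> \<epsilon> * (real n + 1)^2" using e0 by simp
      ultimately show ?thesis using i1 unfolding lam_def by linarith
    qed
    then have "real N * (2 * \<beta> + lam / 4 + 3/4 * \<epsilon> * (real n)^2) \<le> real N * (7 * \<epsilon> * (real n + 1)^2)"
      by (intro mult_left_mono) auto
    then show ?thesis unfolding Rs by (simp add: algebra_simps)
  qed
  finally show ?thesis unfolding x_def P_def .
qed

lemma flat_unit:
  assumes "eps_flat e n a" and w: "cmod w = 1"
  shows "(1 - e) * sqrt (real n + 1) \<le> cmod (upoly a n w) \<and> cmod (upoly a n w) \<le> (1 + e) * sqrt (real n + 1)"
proof -
  have "w \<noteq> 0" using w by auto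
  then have "exp (\<i> * of_real (Arg w)) = w"
    using Arg_correct[of w] w by (simp add: cis_conv_exp sgn_div_norm)
  then show ?thesis using assms(1) unfolding eps_flat_def by metis
qed

lemma final_arith:
  fixes K e1 e2 :: real
  assumes K: "K \<ge> 1" and e1: "0 < e1" "e1 \<le> 1/1000" and e2: "0 < e2" "e2 \<le> 1/1000"
  shows "(1 + e2) * 4 * (25 * K * (25 * K + 1) / 2 + 7 * e1 * (25 * K)^2) < (272 * K^2 + 8 * K) * ((1 - e1) * 5)"
proof -
  have K2: "K \<le> K^2" using K by (simp add: power2_eq_square)
  have "25 * K * (25 * K + 1) / 2 \<le> 325 * K^2" using K2 by (simp add: power2_eq_square algebra_simps)
  moreover have "7 * e1 * (25 * K)^2 \<le> 5 * K^2"
  proof -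
    have "7 * e1 * (25 * K)^2 = (4375 * e1) * K^2" by (simp add: power2_eq_square)
    also have "\<dots> \<le> 5 * K^2" using e1 by (intro mult_right_mono) auto
    finally show ?thesis .
  qed
  ultimately have B: "25 * K * (25 * K + 1) / 2 + 7 * e1 * (25 * K)^2 \<le> 330 * K^2" by linarith
  have "(1 + e2) * 4 * (25 * K * (25 * K + 1) / 2 + 7 * e1 * (25 * K)^2) \<le> (1 + e2) * 4 * (330 * K^2)"
    using B e2 by (intro mult_left_mono) auto
  also have "\<dots> \<le> (1 + 1/1000) * 4 * (330 * K^2)"
    using e2 by (intro mult_right_mono) auto
  also have "\<dots> < 272 * K^2 * ((1 - 1/1000) * 5)" using K by (simp add: power2_eq_square)
  also have "\<dots> \<le> 272 * K^2 * ((1 - e1) * 5)" using e1 by (intro mult_left_mono) auto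
  also have "\<dots> \<le> (272 * K^2 + 8 * K) * ((1 - e1) * 5)" using e1 K by (intro mult_right_mono) auto
  finally show ?thesis .
qed

theorem theorem2p1:
  fixes a :: "nat \<Rightarrow> complex"
  assumes "\<And>j. cmod (a j) = 1"
  shows "\<not> ultraflat (\<lambda>n. a)"
proof
  assume "ultraflat (\<lambda>n. a)"
  then obtain \<epsilon> :: "nat \<Rightarrow> real" where epos: "\<And>n. \<epsilon> n > 0" and elim: "\<epsilon> \<longlonglongrightarrow> 0"
    and fl: "\<And>n. eps_flat (\<epsilon> n) n a"
    unfolding ultraflat_def by blast
  have "\<forall>\<^sub>F n in sequentially. dist (\<epsilon> n) 0 < 1/1000"
    using elim by (rule tendstoD) simp
  then obtain N0 where N0': "\<forall>n\<ge>N0. dist (\<epsilon> n) 0 < 1/1000"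
    unfolding eventually_sequentially by blast
  have N0: "\<epsilon> n < 1/1000" if "n \<ge> N0" for n
    using N0' that by (auto simp: dist_real_def)
  define K :: nat where "K = N0 + 1"
  define n where "n = 25 * K - 1"
  define m where "m = 16 * K - 1"
  define N where "N = 2 * n + 1"
  have n1: "real n + 1 = 25 * real K" and m1: "real m + 1 = 16 * real K"
    unfolding n_def m_def K_def by (simp_all add: of_nat_diff)
  have mn: "m \<le> n" unfolding m_def n_def by simp
  have en: "\<epsilon> n \<le> 1/1000" and em: "\<epsilon> m \<le> 1/1000"
    using N0[of n] N0[of m] unfolding n_def m_def K_def by auto
  define Ln where "Ln = (1 - \<epsilon> n) * sqrt (real n + 1)"
  define Mm where "Mm = (1 + \<epsilon> m) * sqrt (real m + 1)"
  have Ln0: "Ln > 0" unfolding Ln_def using en by simp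
  define C where "C = (\<Sum>j\<le>m. real (n + 1 - j))"
  have Cv: "C = 272 * (real K)^2 + 8 * real K"
  proof -
    have "C = real (m + 1) * real (n + 1) - real m * real (m + 1) / 2" unfolding C_def by (rule sum_lin[OF mn])
    also have "\<dots> = (16 * real K) * (25 * real K) - (16 * real K - 1) * (16 * real K) / 2"
    proof -
      have "real m = 16 * real K - 1" "real (m + 1) = 16 * real K" "real (n + 1) = 25 * real K"
        using n1 m1 by simp_all
      then show ?thesis by simp
    qed
    also have "\<dots> = 272 * (real K)^2 + 8 * real K" by (simp add: power2_eq_square field_simps)
    finally show ?thesis .
  qed
  have cr: "(\<Sum>k<N. Sp a n (rt N k) * cnj (upoly a m (rt N k))) = of_nat N * of_real C"
    unfolding C_def by (rule cross[OF mn]) (use assms N_def in auto)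
  have "real N * C = cmod (\<Sum>k<N. Sp a n (rt N k) * cnj (upoly a m (rt N k)))"
  proof -
    have "C \<ge> 0" unfolding C_def by (simp add: sum_nonneg)
    then show ?thesis unfolding cr by (simp add: norm_mult)
  qed
  also have "\<dots> \<le> (\<Sum>k<N. cmod (Sp a n (rt N k)) * Mm)"
  proof -
    have "cmod (\<Sum>k<N. Sp a n (rt N k) * cnj (upoly a m (rt N k))) \<le> (\<Sum>k<N. cmod (Sp a n (rt N k) * cnj (upoly a m (rt N k))))"
      by (rule norm_sum)
    also have "\<dots> \<le> (\<Sum>k<N. cmod (Sp a n (rt N k)) * Mm)"
    proof (rule sum_mono)
      fix k
      have "cmod (upoly a m (rt N k)) \<le> Mm" unfolding Mm_def using flat_unit[OF fl norm_rt] by blast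
      then show "cmod (Sp a n (rt N k) * cnj (upoly a m (rt N k))) \<le> cmod (Sp a n (rt N k)) * Mm"
        by (simp add: norm_mult mult_left_mono)
    qed
    finally show ?thesis .
  qed
  also have "\<dots> \<le> (\<Sum>k<N. cmod (Sp a n (rt N k) * cnj (upoly a n (rt N k))) / Ln * Mm)"
  proof (rule sum_mono)
    fix k
    have "Ln \<le> cmod (upoly a n (rt N k))" unfolding Ln_def using flat_unit[OF fl norm_rt] by blast
    then have "cmod (Sp a n (rt N k)) * Ln \<le> cmod (Sp a n (rt N k) * cnj (upoly a n (rt N k)))"
      by (simp add: norm_mult mult_left_mono)
    then have "cmod (Sp a n (rt N k)) \<le> cmod (Sp a n (rt N k) * cnj (upoly a n (rt N k))) / Ln"
      using Ln0 by (simp add: field_simps)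
    moreover have "Mm \<ge> 0" unfolding Mm_def using epos[of m] by simp
    ultimately show "cmod (Sp a n (rt N k)) * Mm \<le> cmod (Sp a n (rt N k) * cnj (upoly a n (rt N k))) / Ln * Mm"
      by (rule mult_right_mono)
  qed
  also have "\<dots> = (\<Sum>k<N. cmod (Sp a n (rt N k) * cnj (upoly a n (rt N k)))) * (Mm / Ln)"
    by (simp add: sum_distrib_right sum_divide_distrib)
  also have "\<dots> \<le> real N * (real (n + 1) * real (n + 2) / 2 + 7 * \<epsilon> n * (real n + 1)^2) * (Mm / Ln)"
  proof (rule mult_right_mono)
    show "(\<Sum>k<N. cmod (Sp a n (rt N k) * cnj (upoly a n (rt N k))))
        \<le> real N * (real (n + 1) * real (n + 2) / 2 + 7 * \<epsilon> n * (real n + 1)^2)"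
      by (rule main_est[OF N_def assms epos]) (use en flat_unit[OF fl] in auto)
    show "0 \<le> Mm / Ln" unfolding Mm_def using Ln0 epos[of m] by simp
  qed
  finally have fin: "real N * C \<le> real N * ((real (n + 1) * real (n + 2) / 2 + 7 * \<epsilon> n * (real n + 1)^2) * (Mm / Ln))"
    by (simp only: mult.assoc)
  have "real N > 0" unfolding N_def by simp
  then have "C \<le> (real (n + 1) * real (n + 2) / 2 + 7 * \<epsilon> n * (real n + 1)^2) * (Mm / Ln)"
    using fin by (simp only: mult_le_cancel_left_pos)
  then have ineq: "C * Ln \<le> Mm * (real (n + 1) * real (n + 2) / 2 + 7 * \<epsilon> n * (real n + 1)^2)"
    using Ln0 by (simp add: field_simps)
  have sK: "sqrt (real n + 1) = 5 * sqrt (real K)" "sqrt (real m + 1) = 4 * sqrt (real K)"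
    unfolding n1 m1 by (simp_all add: real_sqrt_mult)
  have sK0: "sqrt (real K) > 0" unfolding K_def by simp
  have "(272 * (real K)^2 + 8 * real K) * ((1 - \<epsilon> n) * 5) * sqrt (real K)
      \<le> (1 + \<epsilon> m) * 4 * (25 * real K * (25 * real K + 1) / 2 + 7 * \<epsilon> n * (25 * real K)^2) * sqrt (real K)"
  proof -
    have Lnv: "Ln = (1 - \<epsilon> n) * 5 * sqrt (real K)" unfolding Ln_def sK by simp
    have Mmv: "Mm = (1 + \<epsilon> m) * 4 * sqrt (real K)" unfolding Mm_def sK by simp
    have r1: "real (n + 1) = 25 * real K" "real (n + 2) = 25 * real K + 1" using n1 by simp_all
    have Bv: "real (n + 1) * real (n + 2) / 2 + 7 * \<epsilon> n * (real n + 1)^2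
        = 25 * real K * (25 * real K + 1) / 2 + 7 * \<epsilon> n * (25 * real K)^2"
      unfolding r1 n1 by simp
    have "C * Ln \<le> Mm * (25 * real K * (25 * real K + 1) / 2 + 7 * \<epsilon> n * (25 * real K)^2)"
      using ineq unfolding Bv .
    then show ?thesis unfolding Cv Lnv Mmv by (simp only: mult_ac)
  qed
  then have "(272 * (real K)^2 + 8 * real K) * ((1 - \<epsilon> n) * 5)
      \<le> (1 + \<epsilon> m) * 4 * (25 * real K * (25 * real K + 1) / 2 + 7 * \<epsilon> n * (25 * real K)^2)"
    using sK0 by (simp only: mult_le_cancel_right)
  moreover have "(1 + \<epsilon> m) * 4 * (25 * real K * (25 * real K + 1) / 2 + 7 * \<epsilon> n * (25 * real K)^2)
      < (272 * (real K)^2 + 8 * real K) * ((1 - \<epsilon> n) * 5)"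
    by (rule final_arith) (use epos en em K_def in auto)
  ultimately show False by linarith
qed

end
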